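(* Let $w, v \in \mathfrak{S}_n$ with $v \prec w$ in the Bruhat order, $\textsf{supp}(v) \subsetneq \textsf{supp}(w)$, and $B(w) \cong \mathbf{2} \times B(v)$, where $\mathbf{2}$ is the two-element chain, and let $i$ be the unique element of $\textsf{supp}(w) \setminus \textsf{supp}(v)$. Then the letter $i$ appears exactly once in every reduced word of $w$.
   Context: $\sigma_i$ ($1\le i\le n-1$) is the simple transposition swapping $i$ and $i+1$; products are compositions of maps. A reduced word of $w$ is a word $i_1\cdots i_\ell$ of minimal length $\ell$ with $w=\sigma_{i_1}\cdots\sigma_{i_\ell}$; $R(w)$ is the set of reduced words. $\textsf{supp}(w)$ is the set of letters appearing in (any) reduced word of $w$. Bruhat order: $v \preceq w$ iff some reduced word of $v$ is a subword of some reduced word of $w$; $B(w)=\{u : u \preceq w\}$. (It is known that under these hypotheses $\textsf{supp}(w)\setminus\textsf{supp}(v)$ is a singleton.) *)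

theory Defs
  imports "HOL-Combinatorics.Transposition" "HOL-Combinatorics.Permutations" "HOL-Library.Sublist"
begin

definition sigma :: "nat \<Rightarrow> nat \<Rightarrow> nat" where
  "sigma i = transpose i (Suc i)"

definition word_perm :: "nat list \<Rightarrow> (nat \<Rightarrow> nat)" where
  "word_perm ws = foldr (\<lambda>i f. sigma i \<circ> f) ws id"

definition is_word :: "nat \<Rightarrow> nat list \<Rightarrow> bool" where
  "is_word n ws \<longleftrightarrow> set ws \<subseteq> {1..<n}"

definition reduced_words :: "nat \<Rightarrow> (nat \<Rightarrow> nat) \<Rightarrow> nat list set" where
  "reduced_words n w = {ws. is_word n ws \<and> word_perm ws = w \<and>
      (\<forall>us. is_word n us \<and> word_perm us = w \<longrightarrow> length ws \<le> length us)}"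

definition supp :: "nat \<Rightarrow> (nat \<Rightarrow> nat) \<Rightarrow> nat set" where
  "supp n w = (\<Union>ws\<in>reduced_words n w. set ws)"

definition bruhat_le :: "nat \<Rightarrow> (nat \<Rightarrow> nat) \<Rightarrow> (nat \<Rightarrow> nat) \<Rightarrow> bool" where
  "bruhat_le n v w \<longleftrightarrow> (\<exists>a\<in>reduced_words n v. \<exists>b\<in>reduced_words n w. subseq a b)"

definition bruhat_less :: "nat \<Rightarrow> (nat \<Rightarrow> nat) \<Rightarrow> (nat \<Rightarrow> nat) \<Rightarrow> bool" where
  "bruhat_less n v w \<longleftrightarrow> bruhat_le n v w \<and> v \<noteq> w"

definition bruhat_interval :: "nat \<Rightarrow> (nat \<Rightarrow> nat) \<Rightarrow> (nat \<Rightarrow> nat) set" where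
  "bruhat_interval n w = {u. bruhat_le n u w}"

(* B(w) is isomorphic (as a poset) to 2 x B(v), with 2 = {False < True}
   and the componentwise product order *)
definition iso_two_times :: "nat \<Rightarrow> (nat \<Rightarrow> nat) \<Rightarrow> (nat \<Rightarrow> nat) \<Rightarrow> bool" where
  "iso_two_times n w v \<longleftrightarrow>
     (\<exists>f. bij_betw f (bruhat_interval n w) ((UNIV :: bool set) \<times> bruhat_interval n v) \<and>
       (\<forall>x\<in>bruhat_interval n w. \<forall>y\<in>bruhat_interval n w.
          bruhat_le n x y \<longleftrightarrow> (fst (f x) \<le> fst (f y) \<and> bruhat_le n (snd (f x)) (snd (f y)))))"

end

theory Submission
  imports Defs
begin


lemma wp_Nil[simp]: "word_perm [] = id" by (simp add: word_perm_def)
lemma wp_Cons[simp]: "word_perm (j # c) = sigma j \<circ> word_perm c" by (simp add: word_perm_def)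
lemma wp_append: "word_perm (xs @ ys) = word_perm xs \<circ> word_perm ys"
  by (induct xs) (auto simp: word_perm_def)

lemma sigma_permutes: "1 \<le> j \<Longrightarrow> j < n \<Longrightarrow> sigma j permutes {1..n}"
  unfolding sigma_def by (rule permutes_swap_id) auto

lemma sigma_invol[simp]: "sigma j \<circ> sigma j = id"
  unfolding sigma_def by simp
lemma sigma_invol'[simp]: "sigma j (sigma j x) = x"
  unfolding sigma_def by simp

lemma is_word_Cons[simp]: "is_word n (j # c) \<longleftrightarrow> j \<in> {1..<n} \<and> is_word n c"
  by (auto simp: is_word_def)
lemma is_word_append[simp]: "is_word n (xs @ ys) \<longleftrightarrow> is_word n xs \<and> is_word n ys"
  by (auto simp: is_word_def)

lemma wp_permutes: "is_word n c \<Longrightarrow> word_perm c permutes {1..n}"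
proof (induct c)
  case Nil then show ?case using permutes_id[of "{1..n}"] by (simp add: id_def)
next
  case (Cons j c) then show ?case
    using permutes_compose[of "word_perm c" "{1..n}" "sigma j"] sigma_permutes[of j n] by (simp add: comp_def)
qed

definition invs :: "nat \<Rightarrow> (nat \<Rightarrow> nat) \<Rightarrow> (nat \<times> nat) set" where
  "invs n g = {(p,q). 1 \<le> p \<and> p < q \<and> q \<le> n \<and> g q < g p}"

definition invc :: "nat \<Rightarrow> (nat \<Rightarrow> nat) \<Rightarrow> nat" where
  "invc n g = card (invs n g)"

lemma finite_invs[simp]: "finite (invs n g)"
  by (rule finite_subset[of _ "{1..n} \<times> {1..n}"]) (auto simp: invs_def)

lemma invc_right:
  assumes g: "g permutes {1..n}" and j: "1 \<le> j" "j < n"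
  shows "invc n (g \<circ> sigma j) = (if g j < g (Suc j) then invc n g + 1 else invc n g - 1)"
    and "g (Suc j) < g j \<Longrightarrow> invc n g \<ge> 1"
proof -
  let ?s = "sigma j"
  let ?e = "(j, Suc j)"
  let ?h = "\<lambda>(p,q). (?s p, ?s q)"
  have sj: "?s j = Suc j" "?s (Suc j) = j" "\<And>x. x \<noteq> j \<Longrightarrow> x \<noteq> Suc j \<Longrightarrow> ?s x = x"
    by (auto simp: sigma_def)
  have sj2: "?s p = j \<longleftrightarrow> p = Suc j" "?s p = Suc j \<longleftrightarrow> p = j" for p
    by (auto simp: sigma_def transpose_def)
  have ord: "?s p < ?s q" if "p < q" "(p,q) \<noteq> ?e" for p q
    using that sj by (cases "p = j"; cases "p = Suc j"; cases "q = j"; cases "q = Suc j") auto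
  have rng: "1 \<le> ?s p \<and> ?s p \<le> n \<longleftrightarrow> 1 \<le> p \<and> p \<le> n" for p
    using j sj by (cases "p = j"; cases "p = Suc j") auto
  have hinv: "?h (?h x) = x" for x by (cases x) simp
  have A: "invs n (g \<circ> ?s) - {?e} = ?h ` (invs n g - {?e})"
  proof (intro equalityI subsetI)
    fix x assume x: "x \<in> invs n (g \<circ> ?s) - {?e}"
    obtain p q where pq: "x = (p,q)" by (cases x)
    have "?h x \<in> invs n g - {?e}"
      using x ord[of p q] rng[of p] rng[of q] sj sj2[of p] sj2[of q] unfolding pq invs_def
      by (auto split: if_splits)
    then show "x \<in> ?h ` (invs n g - {?e})" using hinv[of x] by force
  next
    fix x assume "x \<in> ?h ` (invs n g - {?e})"
    then obtain p q where x: "x = ?h (p,q)" and pq: "(p,q) \<in> invs n g - {?e}" by auto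
    show "x \<in> invs n (g \<circ> ?s) - {?e}"
      using x pq ord[of p q] rng[of p] rng[of q] sj sj2[of p] sj2[of q] unfolding invs_def
      by (auto split: if_splits)
  qed
  have injh: "inj ?h"
  proof (rule injI)
    fix x y assume "?h x = ?h y"
    then have "?h (?h x) = ?h (?h y)" by simp
    then show "x = y" by (simp only: hinv)
  qed
  have C: "card (invs n (g \<circ> ?s) - {?e}) = card (invs n g - {?e})"
    unfolding A by (rule card_image) (rule inj_on_subset[OF injh], simp)
  have gne: "g j \<noteq> g (Suc j)" using injD[OF permutes_inj[OF g], of j "Suc j"] by auto
  have e1: "?e \<in> invs n (g \<circ> ?s) \<longleftrightarrow> g j < g (Suc j)" using j sj by (auto simp: invs_def)
  have e2: "?e \<in> invs n g \<longleftrightarrow> g (Suc j) < g j" using j by (auto simp: invs_def)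
  have cs: "card X = card (X - {?e}) + (if ?e \<in> X then 1 else 0)" if "finite X" for X :: "(nat\<times>nat) set"
  proof (cases "?e \<in> X")
    case True then have "card X > 0" using that card_gt_0_iff by blast
    then show ?thesis using True that by (simp add: card_Diff_singleton_if)
  qed simp
  show "invc n (g \<circ> sigma j) = (if g j < g (Suc j) then invc n g + 1 else invc n g - 1)"
  proof (cases "g j < g (Suc j)")
    case True
    then have "?e \<in> invs n (g \<circ> ?s)" "?e \<notin> invs n g" using e1 e2 by auto
    then show ?thesis using cs[OF finite_invs[of n g]] cs[OF finite_invs[of n "g \<circ> ?s"]] C True
      unfolding invc_def by (simp only: if_True if_False, simp?)
  next
    case False
    then have "g (Suc j) < g j" using gne by linarith
    then have "?e \<notin> invs n (g \<circ> ?s)" "?e \<in> invs n g" using e1 e2 by auto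
    then show ?thesis using cs[OF finite_invs[of n g]] cs[OF finite_invs[of n "g \<circ> ?s"]] C False
      unfolding invc_def by (simp only: if_True if_False, simp?)
  qed
  show "g (Suc j) < g j \<Longrightarrow> invc n g \<ge> 1"
  proof -
    assume "g (Suc j) < g j"
    then have "?e \<in> invs n g" using e2 by auto
    then show ?thesis using cs[OF finite_invs[of n g]] unfolding invc_def by (simp only: if_True, simp?)
  qed
qed



lemma invc_inv:
  assumes g: "g permutes {1..n}"
  shows "invc n (inv g) = invc n g"
proof -
  let ?h = "\<lambda>(p,q). (g q, g p)"
  have gi: "g (inv g x) = x" "inv g (g x) = x" for x using permutes_inverses[OF g] by auto
  have rg: "1 \<le> g x \<and> g x \<le> n \<longleftrightarrow> 1 \<le> x \<and> x \<le> n" for x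
    using permutes_in_image[OF g, of x] by auto
  have "?h ` invs n g = invs n (inv g)"
  proof (intro equalityI subsetI)
    fix x assume "x \<in> ?h ` invs n g"
    then obtain p q where "x = (g q, g p)" "(p,q) \<in> invs n g" by auto
    then show "x \<in> invs n (inv g)" using rg[of p] rg[of q] gi by (auto simp: invs_def)
  next
    fix x assume x: "x \<in> invs n (inv g)"
    obtain a b where ab: "x = (a,b)" by (cases x)
    have "(inv g b, inv g a) \<in> invs n g"
      using x rg[of "inv g a"] rg[of "inv g b"] gi unfolding ab invs_def by auto
    moreover have "x = ?h (inv g b, inv g a)" using gi ab by simp
    ultimately show "x \<in> ?h ` invs n g" by blast
  qed
  moreover have "inj ?h"
  proof (rule injI)
    fix x y :: "nat \<times> nat" assume "?h x = ?h y"
    then show "x = y" using injD[OF permutes_inj[OF g]] by (cases x, cases y) simp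
  qed
  ultimately show ?thesis unfolding invc_def
    by (metis card_image inj_on_subset subset_UNIV)
qed

lemma inv_sigma_comp:
  assumes g: "g permutes S"
  shows "inv (inv g \<circ> sigma j) = sigma j \<circ> g"
proof (rule inv_unique_comp)
  show "(inv g \<circ> sigma j) \<circ> (sigma j \<circ> g) = id"
    using permutes_inv_o[OF g] by (simp add: comp_assoc[symmetric]) (simp add: comp_assoc)
  show "(sigma j \<circ> g) \<circ> (inv g \<circ> sigma j) = id"
    using permutes_inv_o[OF g] by (simp add: comp_assoc[symmetric]) (simp add: comp_assoc)
qed

lemma invc_left:
  assumes g: "g permutes {1..n}" and j: "1 \<le> j" "j < n"
  shows "invc n (sigma j \<circ> g) = (if inv g j < inv g (Suc j) then invc n g + 1 else invc n g - 1)"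
    and "inv g (Suc j) < inv g j \<Longrightarrow> invc n g \<ge> 1"
proof -
  have ig: "inv g permutes {1..n}" by (rule permutes_inv[OF g])
  have p: "inv g \<circ> sigma j permutes {1..n}" by (rule permutes_compose[OF sigma_permutes[OF j] ig])
  have "invc n (sigma j \<circ> g) = invc n (inv g \<circ> sigma j)"
    using invc_inv[OF p] inv_sigma_comp[OF g] by simp
  then show "invc n (sigma j \<circ> g) = (if inv g j < inv g (Suc j) then invc n g + 1 else invc n g - 1)"
    using invc_right(1)[OF ig j] invc_inv[OF g] by simp
  show "inv g (Suc j) < inv g j \<Longrightarrow> invc n g \<ge> 1"
    using invc_right(2)[OF ig j] invc_inv[OF g] by simp
qed

lemma invc_right_bounds:
  assumes g: "g permutes {1..n}" and j: "1 \<le> j" "j < n"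
  shows "invc n (g \<circ> sigma j) \<le> invc n g + 1" "invc n g \<le> invc n (g \<circ> sigma j) + 1"
proof -
  have "g j \<noteq> g (Suc j)" using injD[OF permutes_inj[OF g], of j "Suc j"] by auto
  then show "invc n (g \<circ> sigma j) \<le> invc n g + 1" "invc n g \<le> invc n (g \<circ> sigma j) + 1"
    using invc_right[OF g j] by (auto split: if_splits)
qed

lemma invc_left_bounds:
  assumes g: "g permutes {1..n}" and j: "1 \<le> j" "j < n"
  shows "invc n (sigma j \<circ> g) \<le> invc n g + 1" "invc n g \<le> invc n (sigma j \<circ> g) + 1"
proof -
  have "inv g j \<noteq> inv g (Suc j)" using injD[OF permutes_inj[OF permutes_inv[OF g]], of j "Suc j"] by auto
  then show "invc n (sigma j \<circ> g) \<le> invc n g + 1" "invc n g \<le> invc n (sigma j \<circ> g) + 1"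
    using invc_left[OF g j] by (auto split: if_splits)
qed

lemma invc_right_word:
  assumes "is_word n ys" "g permutes {1..n}"
  shows "invc n (g \<circ> word_perm ys) \<le> invc n g + length ys \<and> invc n g \<le> invc n (g \<circ> word_perm ys) + length ys"
  using assms
proof (induct ys arbitrary: g)
  case Nil then show ?case by simp
next
  case (Cons j ys)
  have j: "1 \<le> j" "j < n" using Cons by auto
  have p: "g \<circ> sigma j permutes {1..n}" by (rule permutes_compose[OF sigma_permutes[OF j] Cons(3)])
  have e: "g \<circ> word_perm (j # ys) = (g \<circ> sigma j) \<circ> word_perm ys" by (simp add: comp_assoc)
  have ih: "invc n ((g \<circ> sigma j) \<circ> word_perm ys) \<le> invc n (g \<circ> sigma j) + length ys \<and>
      invc n (g \<circ> sigma j) \<le> invc n ((g \<circ> sigma j) \<circ> word_perm ys) + length ys"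
    by (rule Cons(1)[OF _ p]) (use Cons(2) in simp)
  show ?case unfolding e using ih invc_right_bounds[OF Cons(3) j] by (simp only: length_Cons) linarith
qed

lemma invc_left_word:
  assumes "is_word n xs" "g permutes {1..n}"
  shows "invc n (word_perm xs \<circ> g) \<le> invc n g + length xs \<and> invc n g \<le> invc n (word_perm xs \<circ> g) + length xs"
  using assms
proof (induct xs)
  case Nil then show ?case by simp
next
  case (Cons j xs)
  have j: "1 \<le> j" "j < n" using Cons by auto
  have p: "word_perm xs \<circ> g permutes {1..n}" by (rule permutes_compose[OF Cons(3) wp_permutes]) (use Cons in auto)
  have e: "word_perm (j # xs) \<circ> g = sigma j \<circ> (word_perm xs \<circ> g)" by (simp add: comp_assoc)
  have ih: "invc n (word_perm xs \<circ> g) \<le> invc n g + length xs \<and> invc n g \<le> invc n (word_perm xs \<circ> g) + length xs"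
    by (rule Cons(1)) (use Cons(2,3) in simp_all)
  show ?case unfolding e using ih invc_left_bounds[OF p j] by (simp only: length_Cons) linarith
qed

lemma invs_id: "invs n id = {}" by (auto simp: invs_def)
lemma invc_id[simp]: "invc n id = 0" by (simp add: invc_def invs_id)

lemma invc_word_le: "is_word n c \<Longrightarrow> invc n (word_perm c) \<le> length c"
  using invc_left_word[of n c id] permutes_id[of "{1..n}"] by simp



lemma mono_noinv:
  assumes "\<And>j. 1 \<le> j \<Longrightarrow> j < n \<Longrightarrow> g j < g (Suc j)"
  shows "invs n g = {}"
proof -
  have *: "1 \<le> p \<Longrightarrow> p < q \<Longrightarrow> q \<le> n \<Longrightarrow> g p < g q" for p q
  proof (induct q)
    case 0 then show ?case by simp
  next
    case (Suc q)
    show ?case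
    proof (cases "p = q")
      case True then show ?thesis using Suc assms[of q] by simp
    next
      case False
      then have "g p < g q" using Suc by simp
      also have "g q < g (Suc q)" using Suc False by (intro assms) auto
      finally show ?thesis .
    qed
  qed
  show ?thesis unfolding invs_def using * by fastforce
qed

lemma noinv_id:
  assumes g: "g permutes {1..n}" and e: "invs n g = {}"
  shows "g = id"
proof -
  have lt: "g p < g q" if "1 \<le> p" "p < q" "q \<le> n" for p q
  proof -
    have "\<not> g q < g p" using e that unfolding invs_def by blast
    moreover have "g p \<noteq> g q" using injD[OF permutes_inj[OF g], of p q] that by auto
    ultimately show ?thesis by simp
  qed
  have "sorted_wrt (<) (map g [1..<Suc n])"
    unfolding sorted_wrt_map
    by (rule sorted_wrt_mono_rel[OF _ sorted_wrt_upt]) (auto intro: lt)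
  then have s: "sorted (map g [1..<Suc n])" "distinct (map g [1..<Suc n])"
    by (simp_all add: strict_sorted_iff)
  have st: "set (map g [1..<Suc n]) = set [1..<Suc n]"
    using permutes_image[OF g] by (simp only: set_map set_upt atLeastLessThanSuc_atLeastAtMost)
  have "map g [1..<Suc n] = [1..<Suc n]"
    by (rule sorted_distinct_set_unique[OF s _ _ st]) (simp_all del: upt_Suc)
  then have "map g [1..<Suc n] = map id [1..<Suc n]" by simp
  then have "\<forall>x\<in>set [1..<Suc n]. g x = id x" by (simp only: map_eq_conv)
  then have "\<forall>x\<in>{1..n}. g x = x" by (simp only: set_upt atLeastLessThanSuc_atLeastAtMost id_apply)
  moreover have "\<forall>x. x \<notin> {1..n} \<longrightarrow> g x = x" using g unfolding permutes_def by blast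
  ultimately show ?thesis by (auto simp: fun_eq_iff)
qed

lemma exists_word:
  "g permutes {1..n} \<Longrightarrow> \<exists>c. is_word n c \<and> word_perm c = g \<and> length c = invc n g"
proof (induct "invc n g" arbitrary: g)
  case 0
  then have "invs n g = {}" unfolding invc_def by simp
  then have "g = id" using noinv_id 0 by blast
  then show ?case using 0(1) by (intro exI[of _ "[]"]) (simp add: is_word_def)
next
  case (Suc k)
  obtain j where j: "1 \<le> j" "j < n" "g (Suc j) < g j"
  proof (rule ccontr)
    assume "\<not> thesis"
    then have "\<And>j. 1 \<le> j \<Longrightarrow> j < n \<Longrightarrow> g j < g (Suc j)"
      using that injD[OF permutes_inj[OF Suc(3)]] by (metis linorder_neqE_nat n_not_Suc_n)
    then have "invs n g = {}" by (rule mono_noinv)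
    then show False using Suc(2) unfolding invc_def by simp
  qed
  let ?g = "g \<circ> sigma j"
  have p: "?g permutes {1..n}" by (rule permutes_compose[OF sigma_permutes[OF j(1,2)] Suc(3)])
  have "invc n ?g = k" using invc_right(1)[OF Suc(3) j(1,2)] j(3) Suc(2) by simp
  then obtain c where c: "is_word n c" "word_perm c = ?g" "length c = k"
    using Suc(1)[OF _ p] by metis
  have "word_perm (c @ [j]) = g" using c(2) by (simp add: wp_append comp_assoc)
  then show ?case using c j Suc(2) by (intro exI[of _ "c @ [j]"]) (simp add: is_word_def)
qed

lemma rw_iff:
  "ws \<in> reduced_words n g \<longleftrightarrow> is_word n ws \<and> word_perm ws = g \<and> length ws = invc n g"
proof
  assume a: "ws \<in> reduced_words n g"
  then have w: "is_word n ws" "word_perm ws = g" unfolding reduced_words_def by auto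
  obtain c where c: "is_word n c" "word_perm c = g" "length c = invc n g"
    using exists_word[OF wp_permutes[OF w(1)]] w(2) by auto
  have "length ws \<le> length c" using a c unfolding reduced_words_def by auto
  moreover have "invc n g \<le> length ws" using invc_word_le[OF w(1)] w(2) by simp
  ultimately show "is_word n ws \<and> word_perm ws = g \<and> length ws = invc n g" using w c by simp
next
  assume a: "is_word n ws \<and> word_perm ws = g \<and> length ws = invc n g"
  show "ws \<in> reduced_words n g" unfolding reduced_words_def
  proof (intro CollectI conjI allI impI)
    show "is_word n ws" "word_perm ws = g" using a by auto
    fix us assume u: "is_word n us \<and> word_perm us = g"
    have "invc n (word_perm us) \<le> length us" using u invc_word_le by blast
    then show "length ws \<le> length us" using u a by simp
  qed
qed



lemma sigma_j[simp]: "sigma j j = Suc j" by (simp add: sigma_def)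
lemma sigma_Sj[simp]: "sigma j (Suc j) = j" by (simp add: sigma_def)
lemma sigma_other: "x \<noteq> j \<Longrightarrow> x \<noteq> Suc j \<Longrightarrow> sigma j x = x" by (simp add: sigma_def)

lemma seg_reduced:
  assumes "xs @ ys \<in> reduced_words n g"
  shows "xs \<in> reduced_words n (word_perm xs)" "ys \<in> reduced_words n (word_perm ys)"
proof -
  have a: "is_word n xs" "is_word n ys" "length xs + length ys = invc n (word_perm xs \<circ> word_perm ys)"
    using assms unfolding rw_iff by (auto simp: wp_append)
  have px: "word_perm xs permutes {1..n}" and py: "word_perm ys permutes {1..n}"
    using a wp_permutes by auto
  have "invc n (word_perm xs) \<le> length xs" "invc n (word_perm ys) \<le> length ys"
    using invc_word_le a by auto
  moreover have "invc n (word_perm xs \<circ> word_perm ys) \<le> invc n (word_perm xs) + length ys"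
    using invc_right_word[OF a(2) px] by simp
  moreover have "invc n (word_perm xs \<circ> word_perm ys) \<le> invc n (word_perm ys) + length xs"
    using invc_left_word[OF a(1) py] by simp
  ultimately have "invc n (word_perm xs) = length xs" "invc n (word_perm ys) = length ys"
    using a(3) by linarith+
  then show "xs \<in> reduced_words n (word_perm xs)" "ys \<in> reduced_words n (word_perm ys)"
    unfolding rw_iff using a by auto
qed

definition del :: "nat \<Rightarrow> 'a list \<Rightarrow> 'a list" where
  "del m c = take m c @ drop (Suc m) c"

lemma del_transp:
  assumes c: "c \<in> reduced_words n w" and m: "m < length c"
  shows "\<exists>p q. (p,q) \<in> invs n w \<and> word_perm (del m c) = w \<circ> transpose p q"
proof -
  define j where "j = c ! m"
  define xs where "xs = take m c"
  define ys where "ys = drop (Suc m) c"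
  have ce: "c = xs @ j # ys" unfolding xs_def ys_def j_def using id_take_nth_drop[OF m] .
  have lx: "length xs = m" using m unfolding xs_def by simp
  have wc: "is_word n c" "word_perm c = w" "length c = invc n w" using c unfolding rw_iff by auto
  have jr: "1 \<le> j" "j < n" using wc(1) unfolding ce by auto
  let ?pre = "word_perm xs" and ?suf = "word_perm ys"
  have wx: "is_word n xs" "is_word n ys" using wc(1) unfolding ce by auto
  have ppre: "?pre permutes {1..n}" and psuf: "?suf permutes {1..n}"
    using wp_permutes[OF wx(1)] wp_permutes[OF wx(2)] .
  have r1: "xs @ [j] \<in> reduced_words n (word_perm (xs @ [j]))"
    using seg_reduced(1)[of "xs @ [j]" ys] c unfolding ce by simp
  have r2: "j # ys \<in> reduced_words n (word_perm (j # ys))"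
    using seg_reduced(2)[of xs "j # ys"] c unfolding ce by simp
  have r3: "xs \<in> reduced_words n ?pre" using seg_reduced(1)[of xs "j # ys"] c unfolding ce by simp
  have r4: "ys \<in> reduced_words n ?suf" using seg_reduced(2)[of "[j]" ys] r2 by simp
  have "invc n (?pre \<circ> sigma j) = invc n ?pre + 1"
    using r1 r3 unfolding rw_iff by (simp add: wp_append)
  then have pre_lt: "?pre j < ?pre (Suc j)"
    using invc_right(1)[OF ppre jr] by (simp split: if_splits)
  have "invc n (sigma j \<circ> ?suf) = invc n ?suf + 1"
    using r2 r4 unfolding rw_iff by simp
  then have suf_lt: "inv ?suf j < inv ?suf (Suc j)"
    using invc_left(1)[OF psuf jr] by (simp split: if_splits)
  define p where "p = inv ?suf j"
  define q where "q = inv ?suf (Suc j)"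
  have sp: "?suf p = j" "?suf q = Suc j" unfolding p_def q_def using permutes_inverses[OF psuf] by auto
  have we: "w = ?pre \<circ> sigma j \<circ> ?suf" using wc(2) unfolding ce by (simp add: wp_append comp_assoc)
  have pin: "p \<in> {1..n}" "q \<in> {1..n}" unfolding p_def q_def
    using permutes_in_image[OF permutes_inv[OF psuf]] jr by auto
  have "(p,q) \<in> invs n w" unfolding invs_def using pin suf_lt pre_lt sp
    by (simp add: we p_def[symmetric] q_def[symmetric])
  moreover have "word_perm (del m c) = w \<circ> transpose p q"
  proof
    fix z
    have dz: "word_perm (del m c) z = ?pre (?suf z)"
      unfolding del_def using lx ce by (simp add: wp_append)
    show "word_perm (del m c) z = (w \<circ> transpose p q) z"
    proof (cases "z = p \<or> z = q")
      case True then show ?thesis using dz sp we by (auto simp: transpose_def)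
    next
      case False
      have "?suf z \<noteq> j" "?suf z \<noteq> Suc j" using False sp permutes_inverses[OF psuf]
        unfolding p_def q_def by metis+
      then show ?thesis using dz we False by (simp add: sigma_other)
    qed
  qed
  ultimately show ?thesis by blast
qed



lemma split1:
  assumes "i < length xs"
  shows "\<exists>A x B. xs = A @ x # B \<and> length A = i"
proof -
  have "xs = take i xs @ xs!i # drop (Suc i) xs" by (rule id_take_nth_drop) fact
  moreover have "length (take i xs) = i" using assms by simp
  ultimately show ?thesis by blast
qed

lemma split2:
  assumes "m1 < m2" "m2 < length c"
  shows "\<exists>A j1 B j2 C. c = A @ j1 # B @ j2 # C \<and> length A = m1 \<and> length B = m2 - m1 - 1"
proof -
  obtain A j1 R where c1: "c = A @ j1 # R" "length A = m1" using split1[of m1 c] assms by auto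
  have "m2 - Suc m1 < length R" using assms c1 by simp
  then obtain B j2 C where r: "R = B @ j2 # C" "length B = m2 - Suc m1" using split1[of _ R] by blast
  show ?thesis using c1 r by (intro exI[of _ A] exI[of _ j1] exI[of _ B] exI[of _ j2] exI[of _ C]) simp
qed

lemma sigma_invol2[simp]: "sigma j \<circ> (sigma j \<circ> f) = f"
  by (simp add: comp_assoc[symmetric])

lemma del_first: "del (length A) (A @ j1 # X) = A @ X"
  by (simp add: del_def)
lemma del_second: "del (length A + 1 + length B) (A @ j1 # B @ j2 # C) = A @ j1 # B @ C"
  by (simp add: del_def)

lemma del_inj_aux:
  assumes c: "c \<in> reduced_words n w" and m: "m1 < m2" "m2 < length c"
  shows "word_perm (del m1 c) \<noteq> word_perm (del m2 c)"
proof
  assume eq: "word_perm (del m1 c) = word_perm (del m2 c)"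
  obtain A j1 B j2 C where ce: "c = A @ j1 # B @ j2 # C" and lA: "length A = m1" and lB: "length B = m2 - m1 - 1"
    using split2[OF m] by blast
  have m2e: "m2 = length A + 1 + length B" using lA lB m by simp
  have d1: "del m1 c = A @ B @ j2 # C" using del_first[of A j1 "B @ j2 # C"] ce lA by simp
  have d2: "del m2 c = A @ j1 # B @ C" using del_second[of A B j1 j2 C] ce m2e by simp
  have wc: "is_word n c" "word_perm c = w" "length c = invc n w" using c unfolding rw_iff by auto
  have ws: "is_word n A" "is_word n B" "is_word n C" using wc(1) ce by auto
  let ?a = "word_perm A" and ?b = "word_perm B" and ?c = "word_perm C"
  have ia: "inj ?a" using permutes_inj[OF wp_permutes[OF ws(1)]] .
  have sc: "surj ?c" using permutes_surj[OF wp_permutes[OF ws(3)]] .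
  have "?a \<circ> (?b \<circ> sigma j2) \<circ> ?c = ?a \<circ> (sigma j1 \<circ> ?b) \<circ> ?c"
    using eq unfolding d1 d2 by (simp add: wp_append comp_assoc)
  then have "\<forall>z. ?a ((?b \<circ> sigma j2) (?c z)) = ?a ((sigma j1 \<circ> ?b) (?c z))"
    by (metis comp_apply)
  then have "\<forall>z. (?b \<circ> sigma j2) (?c z) = (sigma j1 \<circ> ?b) (?c z)"
    using injD[OF ia] by blast
  then have bs: "?b \<circ> sigma j2 = sigma j1 \<circ> ?b"
    using sc by (metis surjD ext)
  have "w = ?a \<circ> sigma j1 \<circ> (?b \<circ> sigma j2) \<circ> ?c"
    using wc(2) ce by (simp add: wp_append comp_assoc)
  also have "\<dots> = ?a \<circ> (sigma j1 \<circ> sigma j1) \<circ> ?b \<circ> ?c" unfolding bs by (simp add: comp_assoc)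
  also have "\<dots> = word_perm (A @ B @ C)" by (simp add: wp_append comp_assoc)
  finally have "invc n w \<le> length (A @ B @ C)" using invc_word_le[of n "A @ B @ C"] ws by simp
  then show False using wc(3) ce by simp
qed

lemma del_inj:
  assumes c: "c \<in> reduced_words n w"
  shows "inj_on (\<lambda>m. word_perm (del m c)) {..<length c}"
proof (rule inj_onI)
  fix x y assume "x \<in> {..<length c}" "y \<in> {..<length c}" "word_perm (del x c) = word_perm (del y c)"
  then show "x = y" using del_inj_aux[OF c, of x y] del_inj_aux[OF c, of y x]
    by (metis lessThan_iff linorder_neqE_nat)
qed

lemma exchange:
  assumes c: "c \<in> reduced_words n w" and pq: "(p,q) \<in> invs n w"
  shows "\<exists>m < length c. word_perm (del m c) = w \<circ> transpose p q"
proof -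
  let ?S = "(\<lambda>(p,q). w \<circ> transpose p q) ` invs n w"
  let ?D = "(\<lambda>m. word_perm (del m c)) ` {..<length c}"
  have fS: "finite ?S" by simp
  have cS: "card ?S \<le> length c"
    using card_image_le[OF finite_invs, of "\<lambda>(p,q). w \<circ> transpose p q" n w] c
    unfolding rw_iff invc_def by simp
  have sub: "?D \<subseteq> ?S"
  proof
    fix x assume "x \<in> ?D"
    then obtain m where "m < length c" "x = word_perm (del m c)" by auto
    then show "x \<in> ?S" using del_transp[OF c] by fastforce
  qed
  have cD: "card ?D = length c" using card_image[OF del_inj[OF c]] by simp
  have "?D = ?S"
    by (rule card_subset_eq[OF fS sub]) (use cS cD card_mono[OF fS sub] in linarith)
  moreover have "w \<circ> transpose p q \<in> ?S" using pq by force
  ultimately have "w \<circ> transpose p q \<in> ?D" by simp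
  then obtain m where "m \<in> {..<length c}" "w \<circ> transpose p q = word_perm (del m c)" by (rule imageE)
  then show ?thesis by auto
qed



lemma bruhat_inv_le: "bruhat_le n u u' \<Longrightarrow> invc n u \<le> invc n u'"
proof -
  assume "bruhat_le n u u'"
  then obtain a x where ax: "a \<in> reduced_words n u" "x \<in> reduced_words n u'" "subseq a x"
    unfolding bruhat_le_def by blast
  have "length a \<le> length x" using ax(3) by (rule list_emb_length)
  then show ?thesis using ax(1,2) unfolding rw_iff by simp
qed

lemma bruhat_eq: "bruhat_le n u u' \<Longrightarrow> invc n u = invc n u' \<Longrightarrow> u = u'"
proof -
  assume "bruhat_le n u u'" and e: "invc n u = invc n u'"
  then obtain a x where ax: "a \<in> reduced_words n u" "x \<in> reduced_words n u'" "subseq a x"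
    unfolding bruhat_le_def by blast
  have "length a = length x" using ax(1,2) e unfolding rw_iff by simp
  then have "a = x" using subseq_same_length[OF ax(3)] by simp
  then show ?thesis using ax(1,2) unfolding rw_iff by simp
qed

lemma bruhat_refl: "ws \<in> reduced_words n u \<Longrightarrow> bruhat_le n u u"
  unfolding bruhat_le_def by blast

lemma prefix_red:
  assumes "b \<in> reduced_words n w"
  shows "take k b \<in> reduced_words n (word_perm (take k b))"
  using seg_reduced(1)[of "take k b" "drop k b" n w] assms by simp

lemma subseq_del:
  "subseq a b \<Longrightarrow> length b = Suc (length a) \<Longrightarrow> \<exists>m < length b. a = del m b"
proof (induct b arbitrary: a)
  case Nil then show ?case by simp
next
  case (Cons x b')
  show ?case
  proof (cases a)
    case Nil
    then have "b' = []" using Cons by simp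
    then show ?thesis using Nil by (intro exI[of _ 0]) (simp add: del_def)
  next
    case (Cons y a')
    show ?thesis
    proof (cases "y = x \<and> subseq a' b'")
      case True
      then obtain m where "m < length b'" "a' = del m b'" using Cons.hyps[of a'] Cons.prems \<open>a = y # a'\<close> by auto
      then show ?thesis using True \<open>a = y # a'\<close> by (intro exI[of _ "Suc m"]) (simp add: del_def)
    next
      case False
      then have "subseq a b'" using Cons.prems(1) \<open>a = y # a'\<close> by (auto split: if_splits)
      moreover have "length a = length b'" using Cons.prems(2) by simp
      ultimately have "a = b'" using subseq_same_length by blast
      then show ?thesis by (intro exI[of _ 0]) (simp add: del_def)
    qed
  qed
qed

lemma jpres: "i \<notin> set d \<Longrightarrow> (word_perm d z \<le> i \<longleftrightarrow> z \<le> i)"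
proof (induct d arbitrary: z)
  case Nil then show ?case by simp
next
  case (Cons k d)
  have "k \<noteq> i" using Cons by simp
  then have "sigma k y \<le> i \<longleftrightarrow> y \<le> i" for y
    by (auto simp: sigma_def transpose_def)
  then show ?case using Cons by simp
qed

lemma count_one_aux:
  assumes "m < length c" "i \<notin> set (del m c)"
  shows "count_list c i \<le> 1" "i \<in> set c \<Longrightarrow> c ! m = i"
proof -
  have ce: "c = take m c @ c ! m # drop (Suc m) c" by (rule id_take_nth_drop) fact
  have "i \<notin> set (take m c)" "i \<notin> set (drop (Suc m) c)" using assms(2) unfolding del_def by auto
  then have "count_list (take m c) i = 0" "count_list (drop (Suc m) c) i = 0"
    by (simp_all add: count_list_0_iff)
  then have "count_list (take m c @ c ! m # drop (Suc m) c) i \<le> 1" by simp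
  then show "count_list c i \<le> 1" using ce by metis
  show "i \<in> set c \<Longrightarrow> c ! m = i"
    using \<open>i \<notin> set (take m c)\<close> \<open>i \<notin> set (drop (Suc m) c)\<close> ce
    by (metis Un_iff set_ConsD set_append)
qed

theorem corollary2p2:
  fixes n :: nat and w v :: "nat \<Rightarrow> nat" and i :: nat
  assumes "w permutes {1..n}" and "v permutes {1..n}"
    and "bruhat_less n v w"
    and "supp n v \<subset> supp n w"
    and "iso_two_times n w v"
    and "i \<in> supp n w - supp n v"
  shows "\<forall>ws\<in>reduced_words n w. count_list ws i = 1"
proof -
  obtain f where fb: "bij_betw f (bruhat_interval n w) ((UNIV :: bool set) \<times> bruhat_interval n v)"
    and fo: "\<And>x y. x \<in> bruhat_interval n w \<Longrightarrow> y \<in> bruhat_interval n w \<Longrightarrow>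
          bruhat_le n x y \<longleftrightarrow> (fst (f x) \<le> fst (f y) \<and> bruhat_le n (snd (f x)) (snd (f y)))"
    using assms(5) unfolding iso_two_times_def by blast
  have vw: "bruhat_le n v w" "v \<noteq> w" using assms(3) unfolding bruhat_less_def by auto
  obtain a b where ab: "a \<in> reduced_words n v" "b \<in> reduced_words n w" "subseq a b"
    using vw(1) unfolding bruhat_le_def by blast
  have lvw: "invc n v < invc n w" using bruhat_inv_le[OF vw(1)] bruhat_eq[OF vw(1)] vw(2) by force
  have bw: "is_word n b" "word_perm b = w" "length b = invc n w" using ab(2) unfolding rw_iff by auto
  have av: "is_word n a" "word_perm a = v" "length a = invc n v" using ab(1) unfolding rw_iff by auto
  define P where "P k = word_perm (take k b)" for k
  define Phi where "Phi x = (if fst (f x) then 1 else 0) + invc n (snd (f x))" for x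
  have Pred: "take k b \<in> reduced_words n (P k)" for k unfolding P_def by (rule prefix_red[OF ab(2)])
  have Pinv: "k \<le> length b \<Longrightarrow> invc n (P k) = k" for k using Pred[of k] unfolding rw_iff by simp
  have PB: "P k \<in> bruhat_interval n w" for k
    unfolding bruhat_interval_def bruhat_le_def using Pred[of k] ab(2) take_is_prefix[of k b]
    by (blast intro: prefix_imp_subseq)
  have Pstep: "bruhat_le n (P k) (P (Suc k))" for k
  proof -
    have "prefix (take k b) (take (Suc k) b)"
      using take_is_prefix[of k "take (Suc k) b"] by (simp add: min_def)
    then show ?thesis unfolding bruhat_le_def using Pred[of k] Pred[of "Suc k"]
      by (blast intro: prefix_imp_subseq)
  qed
  have injf: "inj_on f (bruhat_interval n w)" using fb bij_betw_def by blast
  have sndB: "x \<in> bruhat_interval n w \<Longrightarrow> snd (f x) \<in> bruhat_interval n v" for x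
    using bij_betwE[OF fb] by (metis mem_Sigma_iff prod.collapse)
  have Phistep: "Phi (P k) < Phi (P (Suc k))" if k: "k < length b" for k
  proof -
    have o: "fst (f (P k)) \<le> fst (f (P (Suc k)))" "bruhat_le n (snd (f (P k))) (snd (f (P (Suc k))))"
      using fo[OF PB PB] Pstep[of k] by auto
    have "P k \<noteq> P (Suc k)" using Pinv[of k] Pinv[of "Suc k"] k by auto
    then have ne: "f (P k) \<noteq> f (P (Suc k))" using injf PB by (meson inj_on_def)
    have le: "invc n (snd (f (P k))) \<le> invc n (snd (f (P (Suc k))))" by (rule bruhat_inv_le[OF o(2)])
    show ?thesis
    proof (cases "invc n (snd (f (P k))) = invc n (snd (f (P (Suc k))))")
      case True
      then have "snd (f (P k)) = snd (f (P (Suc k)))" by (rule bruhat_eq[OF o(2)])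
      then have "fst (f (P k)) \<noteq> fst (f (P (Suc k)))" using ne prod_eq_iff by blast
      then have "\<not> fst (f (P k))" "fst (f (P (Suc k)))" using o(1) by (auto simp: le_bool_def)
      then show ?thesis unfolding Phi_def using True by simp
    next
      case False
      then show ?thesis unfolding Phi_def using le o(1) by (auto simp: le_bool_def)
    qed
  qed
  have Phige: "k \<le> length b \<Longrightarrow> k \<le> Phi (P k)" for k
  proof (induct k)
    case 0 then show ?case by simp
  next
    case (Suc k) then show ?case using Phistep[of k] by simp
  qed
  have "P (length b) = w" unfolding P_def using bw by simp
  then have "length b \<le> Phi w" using Phige[of "length b"] by simp
  moreover have "invc n (snd (f w)) \<le> invc n v"
    using sndB[of w] PB[of "length b"] \<open>P (length b) = w\<close>
    unfolding bruhat_interval_def by (auto intro: bruhat_inv_le)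
  ultimately have "invc n w \<le> invc n v + 1" unfolding Phi_def using bw by (simp split: if_splits)
  then have lv: "invc n v + 1 = invc n w" using lvw by simp
  obtain m where m: "m < length b" "a = del m b" using subseq_del[OF ab(3)] av bw lv by auto
  obtain p q where pq: "(p,q) \<in> invs n w" "word_perm (del m b) = w \<circ> transpose p q"
    using del_transp[OF ab(2) m(1)] by blast
  have vt: "v = w \<circ> transpose p q" using pq m av by simp
  have key: "\<exists>m < length c. i \<notin> set (del m c)" if c: "c \<in> reduced_words n w" for c
  proof -
    obtain m where m: "m < length c" "word_perm (del m c) = v" using exchange[OF c pq(1)] vt by auto
    have cw: "is_word n c" "length c = invc n w" using c unfolding rw_iff by auto
    have "is_word n (del m c)" using cw(1) set_take_subset[of m c] set_drop_subset[of "Suc m" c]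
      unfolding del_def is_word_append unfolding is_word_def by blast
    moreover have "length (del m c) = invc n v" using m(1) cw lv unfolding del_def by simp
    ultimately have "del m c \<in> reduced_words n v" using m(2) unfolding rw_iff by simp
    then have "set (del m c) \<subseteq> supp n v" unfolding supp_def by blast
    then show ?thesis using assms(6) m(1) by blast
  qed
  obtain b' where b': "b' \<in> reduced_words n w" "i \<in> set b'" using assms(6) unfolding supp_def by blast
  obtain m' where m': "m' < length b'" "i \<notin> set (del m' b')" using key[OF b'(1)] by blast
  have bi: "b' ! m' = i" using count_one_aux(2)[OF m' b'(2)] .
  define X where "X = take m' b'"
  define Y where "Y = drop (Suc m') b'"
  have be: "b' = X @ i # Y" unfolding X_def Y_def using id_take_nth_drop[OF m'(1)] bi by simp
  have XY: "i \<notin> set X" "i \<notin> set Y" using m'(2) unfolding del_def X_def Y_def by auto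
  have wY: "is_word n Y" using b'(1) be unfolding rw_iff by simp
  obtain z where z: "word_perm Y z = i" using permutes_surj[OF wp_permutes[OF wY]] by (metis surjD)
  have zi: "z \<le> i" using jpres[OF XY(2), of z] z by simp
  have wz: "w z = word_perm X (Suc i)" using b'(1) be z unfolding rw_iff by (auto simp: wp_append)
  have nwz: "\<not> w z \<le> i" using jpres[OF XY(1), of "Suc i"] wz by simp
  show ?thesis
  proof
    fix c assume c: "c \<in> reduced_words n w"
    obtain mc where mc: "mc < length c" "i \<notin> set (del mc c)" using key[OF c] by blast
    have "i \<in> set c"
    proof (rule ccontr)
      assume "i \<notin> set c"
      then have "word_perm c z \<le> i" using jpres zi by blast
      then show False using nwz c unfolding rw_iff by simp
    qed
    then have "count_list c i \<noteq> 0" by (simp add: count_list_0_iff)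
    then show "count_list c i = 1" using count_one_aux(1)[OF mc] by simp
  qed
qed

end
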